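(* Let $s$ be a sequence of positive integers. If $L_1,L_2\subseteq S_s$ are zig-zag languages, then $L_1\cap L_2$ and $L_1\cup L_2$ are zig-zag languages.
   Context: For a sequence $s=(s_1,\dots,s_m)$ of positive integers, an $s$-word is a word with exactly $s_i$ copies of $i$ for each $i\in[m]$; $S_s$ is the set of $s$-words. Parent operation: $p(s)=(s_1,\dots,s_{m-1},s_m-1)$ if $s_m>1$ and $p(s)=(s_1,\dots,s_{m-1})$ if $s_m=1$; for an $s$-word $w$, $p(w)$ deletes the rightmost copy of $m$; $p(L)=\{p(w):w\in L\}$. Zig-zag language (recursive on $n=\sum s_i$): for the empty sequence the only zig-zag language is $\{\varepsilon\}$. For $n\ge1$, $L\subseteq S_s$ is zig-zag if $p(L)$ is a zig-zag language of $p(s)$-words and for every $w'\in p(L)$ both of the following lie in $L$: (a) $w'm$, and (b) $mw'$ if $s_m=1$, or, if $s_m>1$, the word obtained by inserting $m$ immediately next to the rightmost $m$ of $w'$. *)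

theory Defs
  imports Main
begin

text \<open>Sequences s = (s_1,...,s_m) are lists of naturals (s_i = s ! (i-1));
words are lists of naturals over the alphabet {1..m}.\<close>

definition swords :: "nat list \<Rightarrow> nat list set" where
  "swords s = {w. set w \<subseteq> {1..length s} \<and>
                  (\<forall>i\<in>{1..length s}. count_list w i = s ! (i - 1))}"

definition pseq :: "nat list \<Rightarrow> nat list" where
  "pseq s = (if last s \<le> 1 then butlast s else butlast s @ [last s - 1])"

definition pword :: "nat \<Rightarrow> nat list \<Rightarrow> nat list" where
  "pword m w = rev (remove1 m (rev w))"

fun dup_first :: "nat \<Rightarrow> nat list \<Rightarrow> nat list" where
  "dup_first m [] = []"
| "dup_first m (x # xs) = (if x = m then m # x # xs else x # dup_first m xs)"

definition ins_next :: "nat \<Rightarrow> nat list \<Rightarrow> nat list" where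
  "ins_next m w = rev (dup_first m (rev w))"

function zigzag :: "nat list \<Rightarrow> nat list set \<Rightarrow> bool" where
  "zigzag s L =
     (if s = [] then L = {[]}
      else (let m = length s; P = pword m ` L in
              L \<subseteq> swords s \<and> zigzag (pseq s) P \<and>
              (\<forall>w'\<in>P. w' @ [m] \<in> L \<and>
                 (if last s = 1 then m # w' \<in> L else ins_next m w' \<in> L))))"
  by pat_completeness auto
termination
  apply (relation "measure (\<lambda>(s, L). sum_list s + length s)")
   apply simp
  subgoal for s L
    apply (cases s rule: rev_cases)
     apply (auto simp: pseq_def)
    done
  done

end

theory Submission
  imports Defs
begin

declare zigzag.simps[simp del]

lemma zz_unf: "s \<noteq> [] \<Longrightarrow> zigzag s L = (L \<subseteq> swords s \<and> zigzag (pseq s) (pword (length s) ` L) \<and>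
              (\<forall>w'\<in>pword (length s) ` L. w' @ [length s] \<in> L \<and>
                 (if last s = 1 then length s # w' \<in> L else ins_next (length s) w' \<in> L)))"
  by (subst zigzag.simps) (simp add: Let_def)

lemma zz_nil: "zigzag [] L = (L = {[]})"
  by (subst zigzag.simps) simp

lemma pword_snoc: "pword m (w @ [m]) = w"
  by (simp add: pword_def)

lemma meas_dec: "s \<noteq> [] \<Longrightarrow> sum_list (pseq s) + length (pseq s) < sum_list s + length s"
  apply (cases s rule: rev_cases)
   apply (auto simp: pseq_def)
  done

lemma zz_main:
  "zigzag s L1 \<Longrightarrow> zigzag s L2 \<Longrightarrow> zigzag s (L1 \<inter> L2) \<and> zigzag s (L1 \<union> L2)"
proof (induction "sum_list s + length s" arbitrary: s L1 L2 rule: less_induct)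
  case less
  show ?case
  proof (cases "s = []")
    case True
    with less.prems show ?thesis by (simp add: zz_nil)
  next
    case False
    define m where "m = length s"
    have z1: "L1 \<subseteq> swords s" "zigzag (pseq s) (pword m ` L1)"
      "\<forall>w'\<in>pword m ` L1. w' @ [m] \<in> L1 \<and>
                 (if last s = 1 then m # w' \<in> L1 else ins_next m w' \<in> L1)"
      using less.prems(1) zz_unf[OF False] by (simp_all add: m_def)
    have z2: "L2 \<subseteq> swords s" "zigzag (pseq s) (pword m ` L2)"
      "\<forall>w'\<in>pword m ` L2. w' @ [m] \<in> L2 \<and>
                 (if last s = 1 then m # w' \<in> L2 else ins_next m w' \<in> L2)"
      using less.prems(2) zz_unf[OF False] by (simp_all add: m_def)
    have IH: "zigzag (pseq s) (pword m ` L1 \<inter> pword m ` L2) \<and>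
              zigzag (pseq s) (pword m ` L1 \<union> pword m ` L2)"
      using less.hyps[OF meas_dec[OF False]] z1(2) z2(2) by blast
    have pi: "pword m ` (L1 \<inter> L2) = pword m ` L1 \<inter> pword m ` L2"
    proof
      show "pword m ` (L1 \<inter> L2) \<subseteq> pword m ` L1 \<inter> pword m ` L2" by blast
    next
      show "pword m ` L1 \<inter> pword m ` L2 \<subseteq> pword m ` (L1 \<inter> L2)"
      proof
        fix w assume "w \<in> pword m ` L1 \<inter> pword m ` L2"
        then have "w @ [m] \<in> L1 \<inter> L2" using z1(3) z2(3) by blast
        then show "w \<in> pword m ` (L1 \<inter> L2)"
          using pword_snoc[of m w] by (metis image_eqI)
      qed
    qed
    have pu: "pword m ` (L1 \<union> L2) = pword m ` L1 \<union> pword m ` L2" by blast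
    have eq: "\<And>L. zigzag s L = (L \<subseteq> swords s \<and> zigzag (pseq s) (pword m ` L) \<and>
              (\<forall>w'\<in>pword m ` L. w' @ [m] \<in> L \<and>
                 (if last s = 1 then m # w' \<in> L else ins_next m w' \<in> L)))"
      using zz_unf[OF False] by (simp add: m_def)
    have A: "zigzag s (L1 \<inter> L2)"
      unfolding eq pi using z1 z2 IH by auto
    have B: "zigzag s (L1 \<union> L2)"
      unfolding eq pu using z1 z2 IH by auto
    show ?thesis using A B by blast
  qed
qed

theorem mainTheorem5:
  fixes s :: "nat list" and L1 L2 :: "nat list set"
  assumes "\<forall>i\<in>set s. 0 < i"
    and "zigzag s L1" and "zigzag s L2"
  shows "zigzag s (L1 \<inter> L2) \<and> zigzag s (L1 \<union> L2)"
  using zz_main assms(2,3) by blast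

end
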